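(* Let $\mathcal{M}=\{\nu_1,\dots,\nu_K\}$ be a finite set of probability measures on $\mathcal{A}^\infty$ ($\mathcal{A}$ finite or countable), and let $\varepsilon,\delta>0$. Consider the agent (Algorithm 1) that, using the uniform prior $w_\nu=1/K$ and Bayes mixture $\xi$, at each time step $t$ having observed $\omega_{<t}$ outputs $\xi(\cdot|\omega_{<t})$ if $\hat h_t(\omega_{<t})\le\varepsilon$ and outputs $\bot$ otherwise, then observes $\omega_t$. This agent is KWIK: for every $\mu\in\mathcal{M}$ it fails the run with $\mu$-probability at most $\delta$, and there is a finite number $B(\varepsilon,\delta)$ (depending also on $K$) such that, with $\mu$-probability at least $1-\delta$, it outputs $\bot$ at most $B(\varepsilon,\delta)$ times.
   Context: KWIK framework: the environment chooses an unknown $\mu\in\mathcal{M}$ and the sequence $\omega_1\omega_2\cdots$ is drawn from $\mu$. At each step $t$ the agent outputs either a predictive distribution $\rho(\cdot|\omega_{<t})$ on $\mathcal{A}$ or the symbol $\bot$; the run fails if the agent outputs $\rho$ with $h_{\omega_{<t}}(\rho,\mu)>\varepsilon$, otherwise $\omega_t$ is revealed and the run continues. Notation: $\mathcal{A}^\infty$ carries the $\sigma$-algebra generated by cylinders; $\rho(x):=\rho(\Gamma_x)$, $\rho(y|x):=\rho(xy)/\rho(x)$, $\omega_{<t}=\omega_1\cdots\omega_{t-1}$, $\rho_{<t}(\omega):=\rho(\omega_{<t})$. $\xi(A):=\frac1K\sum_{\nu\in\mathcal{M}}\nu(A)$. $h_x(\rho,\xi):=\sum_a(\sqrt{\rho(a|x)}-\sqrt{\xi(a|x)})^2$,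 $h_t(\nu,\xi)(\omega):=h_{\omega_{<t}}(\nu,\xi)$. With $w_\nu=1/K$ for all $\nu$, $\mathcal{M}_t:=\{\nu\in\mathcal{M}:\forall\tau\le t,\ \nu_{<\tau}/\xi_{<\tau}\ge\delta w_\mu/w_\nu\}=\{\nu:\forall\tau\le t,\ \nu_{<\tau}/\xi_{<\tau}\ge\delta\}$ and $\hat h_t:=\sup_{\nu\in\mathcal{M}_t}h_t(\nu,\xi)$. *)

theory Defs
  imports "HOL-Probability.Probability"
begin

text \<open>Measures live on the sequence space of the countable (possibly finite) alphabet 'a,
  i.e. on stream_space (count_space UNIV), whose sigma-algebra is generated by cylinders.\<close>

definition cyl :: "'a stream measure \<Rightarrow> 'a list \<Rightarrow> real" where
  "cyl \<nu> x = measure \<nu> {\<omega> \<in> space \<nu>. stake (length x) \<omega> = x}"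

definition mix :: "'a stream measure set \<Rightarrow> 'a list \<Rightarrow> real" where
  "mix M x = (\<Sum>\<nu>\<in>M. cyl \<nu> x) / real (card M)"

definition cond :: "('a list \<Rightarrow> real) \<Rightarrow> 'a list \<Rightarrow> 'a \<Rightarrow> real" where
  "cond f x a = f (x @ [a]) / f x"

definition hellinger :: "('a list \<Rightarrow> real) \<Rightarrow> ('a list \<Rightarrow> real) \<Rightarrow> 'a list \<Rightarrow> real" where
  "hellinger f g x = infsum (\<lambda>a. (sqrt (cond f x a) - sqrt (cond g x a))^2) UNIV"

text \<open>M_t for history omega_{<t} of length n = t-1: nu with nu_{<tau}/xi_{<tau} >= delta for all tau <= t,
  i.e. for all prefixes of length k <= n (uniform prior, so w_mu/w_nu = 1).\<close>
definition active :: "'a stream measure set \<Rightarrow> real \<Rightarrow> 'a stream \<Rightarrow> nat \<Rightarrow> 'a stream measure set" where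
  "active M \<delta> \<omega> n = {\<nu> \<in> M. \<forall>k\<le>n. cyl \<nu> (stake k \<omega>) / mix M (stake k \<omega>) \<ge> \<delta>}"

text \<open>hat h_t; the supremum of the (nonnegative) distances, with value 0 for an empty set.\<close>
definition hhat :: "'a stream measure set \<Rightarrow> real \<Rightarrow> 'a stream \<Rightarrow> nat \<Rightarrow> real" where
  "hhat M \<delta> \<omega> n = Sup (insert 0 ((\<lambda>\<nu>. hellinger (cyl \<nu>) (mix M) (stake n \<omega>)) ` active M \<delta> \<omega> n))"

definition abstains :: "'a stream measure set \<Rightarrow> real \<Rightarrow> real \<Rightarrow> 'a stream \<Rightarrow> nat \<Rightarrow> bool" where
  "abstains M \<epsilon> \<delta> \<omega> n \<longleftrightarrow> hhat M \<delta> \<omega> n > \<epsilon>"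

definition fails_at :: "'a stream measure set \<Rightarrow> real \<Rightarrow> real \<Rightarrow> 'a stream measure \<Rightarrow> 'a stream \<Rightarrow> nat \<Rightarrow> bool" where
  "fails_at M \<epsilon> \<delta> \<mu> \<omega> n \<longleftrightarrow>
     \<not> abstains M \<epsilon> \<delta> \<omega> n \<and> hellinger (mix M) (cyl \<mu>) (stake n \<omega>) > \<epsilon>"

definition run_fails :: "'a stream measure set \<Rightarrow> real \<Rightarrow> real \<Rightarrow> 'a stream measure \<Rightarrow> 'a stream \<Rightarrow> bool" where
  "run_fails M \<epsilon> \<delta> \<mu> \<omega> \<longleftrightarrow> (\<exists>n. fails_at M \<epsilon> \<delta> \<mu> \<omega> n)"

text \<open>Steps actually executed in the run (the run stops at the first failure) at which bot is output.\<close>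
definition bot_steps :: "'a stream measure set \<Rightarrow> real \<Rightarrow> real \<Rightarrow> 'a stream measure \<Rightarrow> 'a stream \<Rightarrow> nat set" where
  "bot_steps M \<epsilon> \<delta> \<mu> \<omega> = {n. (\<forall>m<n. \<not> fails_at M \<epsilon> \<delta> \<mu> \<omega> m) \<and> abstains M \<epsilon> \<delta> \<omega> n}"

end

theory Submission
  imports Defs
begin

lemma space_S[simp]: "space (stream_space (count_space UNIV)) = (UNIV :: 'a stream set)"
  by (simp add: space_stream_space)

locale sp = prob_space P for P :: "'a::countable stream measure" +
  assumes sets_P: "sets P = sets (stream_space (count_space UNIV))"
begin

lemma space_P[simp]: "space P = UNIV"
  using sets_eq_imp_space_eq[OF sets_P] by simp

lemma meas_stake[measurable]: "stake n \<in> measurable P (count_space UNIV)"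
  using measurable_stake measurable_cong_sets[OF sets_P refl] by blast

lemma pred_sets: "{\<omega>\<in>space P. Q (stake n \<omega>)} \<in> sets P"
proof -
  have "{\<omega>\<in>space P. Q (stake n \<omega>)} = stake n -` {x. Q x} \<inter> space P" by auto
  also have "\<dots> \<in> sets P" by (rule measurable_sets[OF meas_stake]) auto
  finally show ?thesis .
qed

lemma cyl_sets[measurable]: "{\<omega>. stake n \<omega> = x} \<in> sets P"
  using pred_sets[of "\<lambda>y. y = x" n] by simp

lemma cyl_ec: "ennreal (cyl P x) = emeasure P {\<omega>. stake (length x) \<omega> = x}"
  unfolding cyl_def by (simp add: emeasure_eq_measure)

lemma int_stake: "(\<integral>\<^sup>+\<omega>. f (stake n \<omega>) \<partial>P) = (\<integral>\<^sup>+x. emeasure P {\<omega>. stake n \<omega> = x} * f x \<partial>count_space UNIV)"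
proof -
  have "(\<integral>\<^sup>+\<omega>. f (stake n \<omega>) \<partial>P) = (\<integral>\<^sup>+x. f x \<partial>distr P (count_space UNIV) (stake n))"
    by (simp add: nn_integral_distr)
  also have "distr P (count_space UNIV) (stake n) = density (count_space UNIV) (\<lambda>x. emeasure P {\<omega>. stake n \<omega> = x})"
  proof (rule measure_eqI_countable)
    fix a :: "'a list"
    have "emeasure (distr P (count_space UNIV) (stake n)) {a} = emeasure P {\<omega>. stake n \<omega> = a}"
      by (subst emeasure_distr) (auto intro!: arg_cong[where f="emeasure P"])
    then show "emeasure (distr P (count_space UNIV) (stake n)) {a} = emeasure (density (count_space UNIV) (\<lambda>x. emeasure P {\<omega>. stake n \<omega> = x})) {a}"
      by (simp add: emeasure_density)
  qed auto
  also have "(\<integral>\<^sup>+x. f x \<partial>density (count_space UNIV) (\<lambda>x. emeasure P {\<omega>. stake n \<omega> = x})) = (\<integral>\<^sup>+x. emeasure P {\<omega>. stake n \<omega> = x} * f x \<partial>count_space UNIV)"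
    by (simp add: nn_integral_density)
  finally show ?thesis .
qed

lemma cyl_split:
  "(\<integral>\<^sup>+a. emeasure P {\<omega>. stake (Suc n) \<omega> = x @ [a]} \<partial>count_space UNIV) = emeasure P {\<omega>. stake n \<omega> = x}"
proof -
  have "emeasure P (\<Union>a\<in>UNIV. {\<omega>. stake (Suc n) \<omega> = x @ [a]}) = (\<integral>\<^sup>+a. emeasure P {\<omega>. stake (Suc n) \<omega> = x @ [a]} \<partial>count_space UNIV)"
    apply (rule emeasure_UN_countable)
    apply (rule cyl_sets)
    by (auto simp: disjoint_family_on_def stake_Suc simp del: stake.simps)
  moreover have "(\<Union>a\<in>UNIV. {\<omega>. stake (Suc n) \<omega> = x @ [a]}) = {\<omega>. stake n \<omega> = x}"
    by (auto simp: stake_Suc simp del: stake.simps)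
  ultimately show ?thesis by simp
qed

end

lemma nn_real_infsum:
  fixes d :: "'b::countable \<Rightarrow> real"
  assumes "\<And>a. d a \<ge> 0" "(\<integral>\<^sup>+a. ennreal (d a) \<partial>count_space UNIV) < \<infinity>"
  shows "(\<integral>\<^sup>+a. ennreal (d a) \<partial>count_space UNIV) = ennreal (infsum d UNIV)"
proof -
  have "integrable (count_space UNIV) d"
    using assms by (subst integrable_iff_bounded) auto
  then have "Infinite_Set_Sum.abs_summable_on d UNIV"
    by (simp add: Infinite_Set_Sum.abs_summable_on_def)
  then show ?thesis
    using assms nn_integral_conv_infsetsum[of d UNIV] infsetsum_infsum[of d UNIV] by simp
qed

lemma sqrt_ident:
  fixes p q a b :: real
  assumes "p > 0" "q > 0" "a \<ge> 0" "b \<ge> 0"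
  shows "sqrt (a*b) + sqrt (p*q) * (sqrt (a/p) - sqrt (b/q))^2 / 2 = (sqrt (q/p) * a + sqrt (p/q) * b) / 2"
proof -
  obtain P Q U V where PQ: "P > 0" "Q > 0" "U \<ge> 0" "V \<ge> 0" "p = P^2" "q = Q^2" "a = P^2*U^2" "b = Q^2*V^2"
  proof
    show "sqrt p > 0" "sqrt q > 0" "sqrt (a/p) \<ge> 0" "sqrt (b/q) \<ge> 0" using assms by auto
    show "p = (sqrt p)^2" "q = (sqrt q)^2" using assms by auto
    show "a = (sqrt p)^2 * (sqrt (a/p))^2" "b = (sqrt q)^2 * (sqrt (b/q))^2" using assms by auto
  qed
  have e1: "sqrt (a*b) = P*Q*U*V" using PQ by (simp add: real_sqrt_mult power_mult_distrib[symmetric])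
  have e2: "sqrt (p*q) = P*Q" using PQ by (simp add: real_sqrt_mult)
  have e3: "sqrt (a/p) = U" using PQ by simp
  have e4: "sqrt (b/q) = V" using PQ by simp
  have e5: "sqrt (q/p) = Q/P" using PQ by (simp add: real_sqrt_divide)
  have e6: "sqrt (p/q) = P/Q" using PQ by (simp add: real_sqrt_divide)
  show ?thesis unfolding e1 e2 e3 e4 e5 e6 using PQ
    by (simp add: field_simps power2_eq_square)
qed


lemma reindex:
  fixes F :: "'a::countable list \<Rightarrow> ennreal"
  shows "(\<integral>\<^sup>+y. F y \<partial>count_space {y. length y = Suc n}) = (\<integral>\<^sup>+x. \<integral>\<^sup>+a. F (x@[a]) \<partial>count_space UNIV \<partial>count_space {x. length x = n})"
proof -
  let ?A = "{x::'a list. length x = n}"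
  have sf: "sigma_finite_measure (count_space (UNIV::'a set))" by (rule sigma_finite_measure_count_space)
  have pm: "count_space ?A \<Otimes>\<^sub>M count_space (UNIV::'a set) = count_space (?A \<times> UNIV)"
    apply (rule pair_measure_countable)
     apply (rule countable_subset[OF subset_UNIV])
     apply (rule countableI_type)
    apply (rule countableI_type)
    done
  have "(\<integral>\<^sup>+x. \<integral>\<^sup>+a. F (x@[a]) \<partial>count_space UNIV \<partial>count_space ?A) = integral\<^sup>N (count_space ?A \<Otimes>\<^sub>M count_space UNIV) (\<lambda>z. F (fst z @ [snd z]))"
    using sigma_finite_measure.nn_integral_fst[OF sf, of "\<lambda>z. F (fst z @ [snd z])" "count_space ?A"] by (simp add: pm)
  also have "\<dots> = (\<integral>\<^sup>+z. F (fst z @ [snd z]) \<partial>count_space (?A \<times> UNIV))" by (simp add: pm)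
  also have "\<dots> = (\<integral>\<^sup>+y. F y \<partial>count_space {y. length y = Suc n})"
  proof (rule nn_integral_bij_count_space)
    show "bij_betw (\<lambda>z. fst z @ [snd z]) (?A \<times> UNIV) {y. length y = Suc n}"
      unfolding bij_betw_def
    proof
      show "inj_on (\<lambda>z. fst z @ [snd z]) (?A \<times> UNIV)" by (auto simp: inj_on_def)
      show "(\<lambda>z. fst z @ [snd z]) ` (?A \<times> UNIV) = {y. length y = Suc n}"
      proof (intro equalityI subsetI)
        fix y :: "'a list" assume "y \<in> {y. length y = Suc n}"
        then obtain xs a where "y = xs @ [a]"
          by (cases y rule: rev_cases) auto
        then show "y \<in> (\<lambda>z. fst z @ [snd z]) ` (?A \<times> UNIV)"
          using \<open>y \<in> {y. length y = Suc n}\<close> by (auto intro!: image_eqI[where x="(xs,a)"])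
      qed auto
    qed
  qed
  finally show ?thesis by simp
qed

lemma step:
  fixes f g :: "'a::countable list \<Rightarrow> real"
  assumes f0: "\<And>y. f y \<ge> 0" and g0: "\<And>y. g y \<ge> 0"
    and fs: "(\<integral>\<^sup>+a. ennreal (f (x@[a])) \<partial>count_space UNIV) = ennreal (f x)"
    and gs: "(\<integral>\<^sup>+a. ennreal (g (x@[a])) \<partial>count_space UNIV) = ennreal (g x)"
  shows "(\<integral>\<^sup>+a. ennreal (sqrt (f (x@[a]) * g (x@[a]))) \<partial>count_space UNIV) + ennreal (sqrt (f x * g x) * hellinger f g x / 2) = ennreal (sqrt (f x * g x))"
proof (cases "f x = 0 \<or> g x = 0")
  case True
  have prod0: "f (x@[a]) * g (x@[a]) = 0" for a
  proof -
    have "ennreal (f (x@[a])) \<le> ennreal (f x)"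
      using nn_integral_ge_point[of a UNIV "\<lambda>a. ennreal (f (x@[a]))"] fs by simp
    hence "f (x@[a]) \<le> f x" using f0 by (simp add: ennreal_le_iff)
    moreover have "ennreal (g (x@[a])) \<le> ennreal (g x)"
      using nn_integral_ge_point[of a UNIV "\<lambda>a. ennreal (g (x@[a]))"] gs by simp
    hence "g (x@[a]) \<le> g x" using g0 by (simp add: ennreal_le_iff)
    ultimately show ?thesis using True f0[of "x@[a]"] g0[of "x@[a]"] by auto
  qed
  have "\<And>a. ennreal (sqrt (f (x@[a]) * g (x@[a]))) = 0" using prod0 by (metis ennreal_0 real_sqrt_zero)
  then show ?thesis using True by auto
next
  case False
  define p where "p = f x"
  define q where "q = g x"
  have p: "p > 0" using False f0[of x] unfolding p_def by linarith
  have q: "q > 0" using False g0[of x] unfolding q_def by linarith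
  define u where "u a = f (x@[a]) / p" for a
  define v where "v a = g (x@[a]) / q" for a
  define d where "d a = (sqrt (u a) - sqrt (v a))^2" for a
  have hd: "hellinger f g x = infsum d UNIV"
    by (simp add: hellinger_def cond_def d_def[abs_def] u_def v_def p_def q_def)
  have u0: "u a \<ge> 0" "v a \<ge> 0" for a using p q f0 g0 by (auto simp: u_def v_def)
  have iu: "(\<integral>\<^sup>+a. ennreal (u a) \<partial>count_space UNIV) = 1"
  proof -
    have "(\<integral>\<^sup>+a. ennreal (u a) \<partial>count_space UNIV) = (\<integral>\<^sup>+a. ennreal (f (x@[a])) * ennreal (1/p) \<partial>count_space UNIV)"
      using p f0 by (auto simp: u_def intro!: nn_integral_cong simp flip: ennreal_mult'')
    also have "\<dots> = ennreal p * ennreal (1/p)" by (simp add: nn_integral_multc fs p_def)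
    also have "\<dots> = 1" using p by (simp add: ennreal_mult''[symmetric])
    finally show ?thesis .
  qed
  have iv: "(\<integral>\<^sup>+a. ennreal (v a) \<partial>count_space UNIV) = 1"
  proof -
    have "(\<integral>\<^sup>+a. ennreal (v a) \<partial>count_space UNIV) = (\<integral>\<^sup>+a. ennreal (g (x@[a])) * ennreal (1/q) \<partial>count_space UNIV)"
      using q g0 by (auto simp: v_def intro!: nn_integral_cong simp flip: ennreal_mult'')
    also have "\<dots> = ennreal q * ennreal (1/q)" by (simp add: nn_integral_multc gs q_def)
    also have "\<dots> = 1" using q by (simp add: ennreal_mult''[symmetric])
    finally show ?thesis .
  qed
  have dle: "d a \<le> u a + v a" for a
  proof -
    have "d a = u a + v a - 2 * sqrt (u a) * sqrt (v a)"
      using u0[of a] by (simp add: d_def power2_diff)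
    moreover have "sqrt (u a) * sqrt (v a) \<ge> 0" using u0[of a] by simp
    ultimately show ?thesis by linarith
  qed
  have d0: "d a \<ge> 0" for a by (simp add: d_def)
  have "(\<integral>\<^sup>+a. ennreal (d a) \<partial>count_space UNIV) \<le> (\<integral>\<^sup>+a. ennreal (u a) + ennreal (v a) \<partial>count_space UNIV)"
    using dle u0 by (intro nn_integral_mono) (simp add: ennreal_plus[symmetric] del: ennreal_plus)
  also have "\<dots> = 2" by (simp add: nn_integral_add iu iv)
  finally have "(\<integral>\<^sup>+a. ennreal (d a) \<partial>count_space UNIV) < \<infinity>" by (simp add: le_less_trans)
  then have hell: "(\<integral>\<^sup>+a. ennreal (d a) \<partial>count_space UNIV) = ennreal (hellinger f g x)"
    using nn_real_infsum[of d] d0 hd by simp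
  have "ennreal (sqrt (f x * g x) * hellinger f g x / 2) = ennreal (sqrt (p*q) / 2) * ennreal (hellinger f g x)"
    using d0 hd by (subst ennreal_mult''[symmetric]) (auto simp: p_def q_def infsum_nonneg)
  also have "\<dots> = (\<integral>\<^sup>+a. ennreal (sqrt (p*q) / 2 * d a) \<partial>count_space UNIV)"
  proof -
    have "(\<integral>\<^sup>+a. ennreal (sqrt (p*q) / 2 * d a) \<partial>count_space UNIV) = (\<integral>\<^sup>+a. ennreal (sqrt (p*q) / 2) * ennreal (d a) \<partial>count_space UNIV)"
      using d0 p q by (intro nn_integral_cong) (subst ennreal_mult''[symmetric], simp_all)
    also have "\<dots> = ennreal (sqrt (p*q) / 2) * (\<integral>\<^sup>+a. ennreal (d a) \<partial>count_space UNIV)"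
      by (rule nn_integral_cmult) simp
    finally show ?thesis by (simp add: hell)
  qed
  finally have e1: "ennreal (sqrt (f x * g x) * hellinger f g x / 2) = (\<integral>\<^sup>+a. ennreal (sqrt (p*q) / 2 * d a) \<partial>count_space UNIV)" .
  have "(\<integral>\<^sup>+a. ennreal (sqrt (f (x@[a]) * g (x@[a]))) \<partial>count_space UNIV) + (\<integral>\<^sup>+a. ennreal (sqrt (p*q) / 2 * d a) \<partial>count_space UNIV)
      = (\<integral>\<^sup>+a. ennreal (sqrt (f (x@[a]) * g (x@[a])) + sqrt (p*q) / 2 * d a) \<partial>count_space UNIV)"
  proof -
    have n1: "\<And>a. 0 \<le> sqrt (f (x@[a]) * g (x@[a]))" using f0 g0 by simp
    have n2: "\<And>a. 0 \<le> sqrt (p*q) / 2 * d a" using p q d0 by simp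
    have "(\<integral>\<^sup>+a. ennreal (sqrt (f (x@[a]) * g (x@[a]))) + ennreal (sqrt (p*q) / 2 * d a) \<partial>count_space UNIV)
       = (\<integral>\<^sup>+a. ennreal (sqrt (f (x@[a]) * g (x@[a])) + sqrt (p*q) / 2 * d a) \<partial>count_space UNIV)"
      by (rule nn_integral_cong) (rule ennreal_plus[OF n1 n2, symmetric])
    moreover have "(\<integral>\<^sup>+a. ennreal (sqrt (f (x@[a]) * g (x@[a]))) \<partial>count_space UNIV) + (\<integral>\<^sup>+a. ennreal (sqrt (p*q) / 2 * d a) \<partial>count_space UNIV)
       = (\<integral>\<^sup>+a. ennreal (sqrt (f (x@[a]) * g (x@[a]))) + ennreal (sqrt (p*q) / 2 * d a) \<partial>count_space UNIV)"
      by (rule nn_integral_add[symmetric]) auto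
    ultimately show ?thesis by simp
  qed
  also have "\<dots> = (\<integral>\<^sup>+a. ennreal (sqrt (q/p) / 2) * ennreal (f (x@[a])) + ennreal (sqrt (p/q) / 2) * ennreal (g (x@[a])) \<partial>count_space UNIV)"
  proof (intro nn_integral_cong)
    fix a
    have eq: "sqrt (f (x@[a]) * g (x@[a])) + sqrt (p*q) / 2 * d a = sqrt (q/p) / 2 * f (x@[a]) + sqrt (p/q) / 2 * g (x@[a])"
      using sqrt_ident[OF p q f0[of "x@[a]"] g0[of "x@[a]"]] by (simp add: d_def u_def v_def field_simps)
    moreover have A: "ennreal (sqrt (q/p) / 2) * ennreal (f (x@[a])) = ennreal (sqrt (q/p) / 2 * f (x@[a]))"
      by (rule ennreal_mult''[symmetric, OF f0])
    moreover have B: "ennreal (sqrt (p/q) / 2) * ennreal (g (x@[a])) = ennreal (sqrt (p/q) / 2 * g (x@[a]))"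
      by (rule ennreal_mult''[symmetric, OF g0])
    moreover have C: "ennreal (sqrt (q/p) / 2 * f (x@[a]) + sqrt (p/q) / 2 * g (x@[a])) = ennreal (sqrt (q/p) / 2 * f (x@[a])) + ennreal (sqrt (p/q) / 2 * g (x@[a]))"
      by (rule ennreal_plus) (use p q f0[of "x@[a]"] g0[of "x@[a]"] in auto)
    show "ennreal (sqrt (f (x@[a]) * g (x@[a])) + sqrt (p*q) / 2 * d a) = ennreal (sqrt (q/p) / 2) * ennreal (f (x@[a])) + ennreal (sqrt (p/q) / 2) * ennreal (g (x@[a]))"
      unfolding A B C[symmetric] eq by (rule refl)
  qed
  also have "\<dots> = ennreal (sqrt (q/p) / 2) * ennreal p + ennreal (sqrt (p/q) / 2) * ennreal q"
    by (simp add: nn_integral_add nn_integral_cmult fs gs p_def q_def)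
  also have "\<dots> = ennreal (sqrt (q/p) / 2 * p + sqrt (p/q) / 2 * q)"
    using p q by (simp add: ennreal_mult''[symmetric] ennreal_plus[symmetric] del: ennreal_plus)
  also have "sqrt (q/p) / 2 * p + sqrt (p/q) / 2 * q = sqrt (p*q)"
  proof -
    have "sqrt (q/p) * p = sqrt (q/p) * (sqrt p * sqrt p)" using p by simp
    also have "\<dots> = sqrt (q/p * p) * sqrt p" by (simp only: real_sqrt_mult mult.assoc)
    also have "\<dots> = sqrt (p*q)"
    proof -
      have "q/p*p = q" using p by simp
      thus ?thesis by (simp add: real_sqrt_mult mult.commute)
    qed
    finally have "sqrt (q/p) * p = sqrt (p*q)" .
    moreover have "sqrt (p/q) * q = sqrt (p*q)"
    proof -
      have "sqrt (p/q) * q = sqrt (p/q) * (sqrt q * sqrt q)" using q by simp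
      also have "\<dots> = sqrt (p/q * q) * sqrt q" by (simp only: real_sqrt_mult mult.assoc)
      also have "\<dots> = sqrt (p*q)"
      proof -
        have "p/q*q = p" using q by simp
        thus ?thesis by (simp add: real_sqrt_mult mult.commute)
      qed
      finally show ?thesis .
    qed
    ultimately show ?thesis by (simp add: field_simps)
  qed
  finally show ?thesis using e1 by (simp add: p_def q_def)
qed


lemma hell_nonneg: "hellinger f g x \<ge> 0"
  by (simp add: hellinger_def infsum_nonneg)

lemma telescope:
  fixes f g :: "'a::countable list \<Rightarrow> real"
  assumes f0: "\<And>y. f y \<ge> 0" and g0: "\<And>y. g y \<ge> 0"
    and fs: "\<And>x. (\<integral>\<^sup>+a. ennreal (f (x@[a])) \<partial>count_space UNIV) = ennreal (f x)"
    and gs: "\<And>x. (\<integral>\<^sup>+a. ennreal (g (x@[a])) \<partial>count_space UNIV) = ennreal (g x)"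
  shows "(\<Sum>n. \<integral>\<^sup>+x. ennreal (sqrt (f x * g x) * hellinger f g x / 2) \<partial>count_space {x. length x = n}) \<le> ennreal (sqrt (f [] * g []))"
proof -
  define T where "T n = (\<integral>\<^sup>+x. ennreal (sqrt (f x * g x)) \<partial>count_space {x. length x = n})" for n
  define D where "D n = (\<integral>\<^sup>+x. ennreal (sqrt (f x * g x) * hellinger f g x / 2) \<partial>count_space {x. length x = n})" for n
  have TD: "T (Suc n) + D n = T n" for n
  proof -
    have "T (Suc n) = (\<integral>\<^sup>+x. \<integral>\<^sup>+a. ennreal (sqrt (f (x@[a]) * g (x@[a]))) \<partial>count_space UNIV \<partial>count_space {x. length x = n})"
      unfolding T_def by (rule reindex)
    then have "T (Suc n) + D n = (\<integral>\<^sup>+x. (\<integral>\<^sup>+a. ennreal (sqrt (f (x@[a]) * g (x@[a]))) \<partial>count_space UNIV) + ennreal (sqrt (f x * g x) * hellinger f g x / 2) \<partial>count_space {x. length x = n})"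
      unfolding D_def by (simp add: nn_integral_add)
    also have "\<dots> = T n" unfolding T_def
      by (intro nn_integral_cong step f0 g0 fs gs)
    finally show ?thesis .
  qed
  have T0: "T 0 = ennreal (sqrt (f [] * g []))"
  proof -
    have "{x::'a list. length x = 0} = {[]}" by auto
    then show ?thesis unfolding T_def by (simp add: nn_integral_count_space_finite)
  qed
  have ind: "T n + (\<Sum>k<n. D k) = T 0" for n
  proof (induction n)
    case (Suc n)
    have "T (Suc n) + (\<Sum>k<Suc n. D k) = (T (Suc n) + D n) + (\<Sum>k<n. D k)" by (simp add: add_ac)
    also have "\<dots> = T 0" using Suc TD by simp
    finally show ?case .
  qed simp
  have "(\<Sum>k<n. D k) \<le> T 0" for n
    using ind[of n] by (metis add.commute le_iff_add)
  then have "suminf D \<le> T 0" by (intro suminf_le_const) auto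
  then show ?thesis unfolding D_def[abs_def] T0 .
qed

locale fam =
  fixes M :: "'a::countable stream measure set"
  assumes finM: "finite M" and neM: "M \<noteq> {}" and spM: "\<And>\<nu>. \<nu> \<in> M \<Longrightarrow> sp \<nu>"
begin

definition "K = real (card M)"

lemma K_pos: "K > 0" using finM neM by (simp add: K_def card_gt_0_iff)

lemma cyl0: "cyl \<nu> x \<ge> 0" by (simp add: cyl_def)

lemma cyl_nil: "\<nu> \<in> M \<Longrightarrow> cyl \<nu> [] = 1"
proof -
  assume "\<nu> \<in> M"
  then interpret sp \<nu> by (rule spM)
  show ?thesis using prob_space by (simp add: cyl_def)
qed

lemma cyl_split': "\<nu> \<in> M \<Longrightarrow> (\<integral>\<^sup>+a. ennreal (cyl \<nu> (x@[a])) \<partial>count_space UNIV) = ennreal (cyl \<nu> x)"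
proof -
  assume "\<nu> \<in> M"
  then interpret sp \<nu> by (rule spM)
  show ?thesis using cyl_split[of "length x" x] by (simp add: cyl_ec)
qed

lemma mix0: "mix M x \<ge> 0" by (simp add: mix_def sum_nonneg cyl0)

lemma mix_nil: "mix M [] = 1"
  using K_pos by (simp add: mix_def cyl_nil K_def)

lemma mix_enn: "ennreal (mix M y) = (\<Sum>\<nu>\<in>M. ennreal (cyl \<nu> y)) * ennreal (1/K)"
proof -
  have "mix M y = (\<Sum>\<nu>\<in>M. cyl \<nu> y) * (1/K)" by (simp add: mix_def K_def)
  then have "ennreal (mix M y) = ennreal (\<Sum>\<nu>\<in>M. cyl \<nu> y) * ennreal (1/K)"
    using K_pos by (simp only:) (rule ennreal_mult'', simp)
  then show ?thesis by (simp add: cyl0)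
qed

lemma mix_split: "(\<integral>\<^sup>+a. ennreal (mix M (x@[a])) \<partial>count_space UNIV) = ennreal (mix M x)"
proof -
  have "(\<integral>\<^sup>+a. ennreal (mix M (x@[a])) \<partial>count_space UNIV) = (\<integral>\<^sup>+a. (\<Sum>\<nu>\<in>M. ennreal (cyl \<nu> (x@[a]))) \<partial>count_space UNIV) * ennreal (1/K)"
    unfolding mix_enn by (simp add: nn_integral_multc)
  also have "\<dots> = (\<Sum>\<nu>\<in>M. ennreal (cyl \<nu> x)) * ennreal (1/K)"
    by (simp add: nn_integral_sum cyl_split' del: sum_ennreal)
  finally show ?thesis unfolding mix_enn .
qed

lemma le_mix: "\<mu> \<in> M \<Longrightarrow> cyl \<mu> x \<le> K * mix M x"
proof -
  assume "\<mu> \<in> M"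
  then have "cyl \<mu> x \<le> (\<Sum>\<nu>\<in>M. cyl \<nu> x)" using finM by (intro member_le_sum) (auto simp: cyl0)
  then show ?thesis using K_pos by (simp add: mix_def K_def)
qed

definition "gf \<delta> \<nu> x = (if \<delta> \<le> cyl \<nu> x / mix M x then hellinger (cyl \<nu>) (mix M) x else 0)"

lemma gf_nonneg: "gf \<delta> \<nu> x \<ge> 0" by (simp add: gf_def hell_nonneg)

lemma pointwise:
  assumes "\<mu> \<in> M" "\<delta> > 0"
  shows "cyl \<mu> x * gf \<delta> \<nu> x \<le> (2*K/sqrt \<delta>) * (sqrt (cyl \<nu> x * mix M x) * hellinger (cyl \<nu>) (mix M) x / 2)"
proof (cases "\<delta> \<le> cyl \<nu> x / mix M x")
  case True
  let ?n = "cyl \<nu> x" and ?m = "mix M x" and ?h = "hellinger (cyl \<nu>) (mix M) x"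
  have mpos: "?m > 0"
  proof (rule ccontr)
    assume "\<not> ?m > 0" then have "?m = 0" using mix0[of x] by simp
    then show False using True assms by simp
  qed
  have nge: "?n \<ge> \<delta> * ?m" using True mpos by (simp add: le_divide_eq)
  have "sqrt (?n * ?m) \<ge> sqrt (\<delta> * ?m * ?m)" using nge mpos by (intro real_sqrt_le_mono) simp
  also have "sqrt (\<delta> * ?m * ?m) = sqrt \<delta> * ?m" using mpos assms by (simp add: real_sqrt_mult)
  finally have sge: "sqrt (?n * ?m) \<ge> sqrt \<delta> * ?m" .
  have "cyl \<mu> x * gf \<delta> \<nu> x = cyl \<mu> x * ?h" using True by (simp add: gf_def)
  also have "\<dots> \<le> K * ?m * ?h" using le_mix[OF assms(1)] hell_nonneg by (intro mult_right_mono) auto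
  also have "\<dots> = (K / sqrt \<delta>) * (sqrt \<delta> * ?m) * ?h" using assms by simp
  also have "\<dots> \<le> (K / sqrt \<delta>) * sqrt (?n * ?m) * ?h"
    using sge K_pos assms hell_nonneg by (intro mult_right_mono mult_left_mono) auto
  finally show ?thesis by simp
next
  case False
  then show ?thesis using K_pos assms hell_nonneg[of "cyl \<nu>" "mix M" x] mix0[of x] cyl0[of \<nu> x]
    by (simp add: gf_def)
qed


lemma expect_bound:
  assumes "\<mu> \<in> M" "\<nu> \<in> M" "\<delta> > 0"
  shows "(\<Sum>n. \<integral>\<^sup>+\<omega>. ennreal (gf \<delta> \<nu> (stake n \<omega>)) \<partial>\<mu>) \<le> ennreal (2*K/sqrt \<delta>)"
proof -
  interpret m: sp \<mu> using spM assms by blast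
  define sf where "sf x = sqrt (cyl \<nu> x * mix M x) * hellinger (cyl \<nu>) (mix M) x / 2" for x
  have sf0: "sf x \<ge> 0" for x using hell_nonneg[of "cyl \<nu>" "mix M" x] cyl0[of \<nu> x] mix0[of x] by (simp add: sf_def)
  define c where "c = 2*K/sqrt \<delta>"
  have c0: "c \<ge> 0" using K_pos assms by (simp add: c_def)
  have lvl: "(\<integral>\<^sup>+\<omega>. ennreal (gf \<delta> \<nu> (stake n \<omega>)) \<partial>\<mu>) \<le> ennreal c * (\<integral>\<^sup>+x. ennreal (sf x) \<partial>count_space {x. length x = n})" for n
  proof -
    have "(\<integral>\<^sup>+\<omega>. ennreal (gf \<delta> \<nu> (stake n \<omega>)) \<partial>\<mu>) = (\<integral>\<^sup>+x. emeasure \<mu> {\<omega>. stake n \<omega> = x} * ennreal (gf \<delta> \<nu> x) \<partial>count_space UNIV)"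
      by (rule m.int_stake)
    also have "\<dots> \<le> (\<integral>\<^sup>+x. ennreal c * (ennreal (sf x) * indicator {x. length x = n} x) \<partial>count_space UNIV)"
    proof (intro nn_integral_mono)
      fix x :: "'a list"
      show "emeasure \<mu> {\<omega>. stake n \<omega> = x} * ennreal (gf \<delta> \<nu> x) \<le> ennreal c * (ennreal (sf x) * indicator {x. length x = n} x)"
      proof (cases "length x = n")
        case True
        have "emeasure \<mu> {\<omega>. stake n \<omega> = x} * ennreal (gf \<delta> \<nu> x) = ennreal (cyl \<mu> x * gf \<delta> \<nu> x)"
          using True m.cyl_ec[of x] by (simp add: ennreal_mult'' gf_nonneg)
        also have "\<dots> \<le> ennreal (c * sf x)"
          by (rule ennreal_leI) (use pointwise[OF assms(1,3), of x \<nu>] in \<open>simp add: c_def sf_def\<close>)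
        also have "\<dots> = ennreal c * ennreal (sf x)" using c0 sf0 by (simp add: ennreal_mult)
        finally show ?thesis using True by simp
      next
        case False
        then have "{\<omega>. stake n \<omega> = x} = {}" by auto
        then show ?thesis by simp
      qed
    qed
    also have "\<dots> = ennreal c * (\<integral>\<^sup>+x. ennreal (sf x) \<partial>count_space {x. length x = n})"
      by (simp add: nn_integral_count_space_indicator nn_integral_cmult)
    finally show ?thesis .
  qed
  have "(\<Sum>n. \<integral>\<^sup>+\<omega>. ennreal (gf \<delta> \<nu> (stake n \<omega>)) \<partial>\<mu>) \<le> (\<Sum>n. ennreal c * (\<integral>\<^sup>+x. ennreal (sf x) \<partial>count_space {x. length x = n}))"
    by (intro suminf_le lvl) auto
  also have "\<dots> = ennreal c * (\<Sum>n. \<integral>\<^sup>+x. ennreal (sf x) \<partial>count_space {x. length x = n})" by simp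
  also have "\<dots> \<le> ennreal c * ennreal (sqrt (cyl \<nu> [] * mix M []))"
    unfolding sf_def
    by (intro mult_left_mono telescope) (auto simp: cyl0 mix0 cyl_split' mix_split assms)
  also have "\<dots> = ennreal c" using assms by (simp add: cyl_nil mix_nil)
  finally show ?thesis by (simp add: c_def)
qed

lemma bad_prob:
  assumes "\<mu> \<in> M" "\<delta> > 0"
  shows "emeasure \<mu> {\<omega>. \<exists>k. \<not> \<delta> \<le> cyl \<mu> (stake k \<omega>) / mix M (stake k \<omega>)} \<le> ennreal \<delta>"
proof -
  define bad where "bad x \<longleftrightarrow> \<not> \<delta> \<le> cyl \<mu> x / mix M x" for x
  define S where "S k = {x. length x = k \<and> bad x \<and> (\<forall>j<k. \<not> bad (take j x))}" for k
  define F where "F k = {\<omega>. stake k \<omega> \<in> S k}" for k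
  have Fchar: "F k = {\<omega>. bad (stake k \<omega>) \<and> (\<forall>j<k. \<not> bad (stake j \<omega>))}" for k
    by (auto simp: F_def S_def take_stake min_def)
  have UF: "{\<omega>. \<exists>k. \<not> \<delta> \<le> cyl \<mu> (stake k \<omega>) / mix M (stake k \<omega>)} = (\<Union>k. F k)"
  proof (intro equalityI subsetI)
    fix \<omega> assume "\<omega> \<in> {\<omega>. \<exists>k. \<not> \<delta> \<le> cyl \<mu> (stake k \<omega>) / mix M (stake k \<omega>)}"
    then have ex: "\<exists>k. bad (stake k \<omega>)" by (simp add: bad_def)
    define k where "k = (LEAST k. bad (stake k \<omega>))"
    have "bad (stake k \<omega>)" unfolding k_def using ex by (rule LeastI_ex)
    moreover have "\<forall>j<k. \<not> bad (stake j \<omega>)" unfolding k_def using not_less_Least by blast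
    ultimately show "\<omega> \<in> (\<Union>k. F k)" by (auto simp: Fchar)
  qed (auto simp: Fchar bad_def)
  have disj: "disjoint_family F"
    unfolding disjoint_family_on_def Fchar
    by (auto, metis linorder_neqE_nat)
  have Fmeas: "P \<in> M \<Longrightarrow> F k \<in> sets P" for P k
  proof -
    assume "P \<in> M"
    then interpret sp P by (rule spM)
    show ?thesis using pred_sets[of "\<lambda>x. x \<in> S k" k] by (simp add: F_def)
  qed
  have emF: "emeasure P (F k) = (\<integral>\<^sup>+x. emeasure P {\<omega>. stake k \<omega> = x} * indicator (S k) x \<partial>count_space UNIV)"
    if "P \<in> M" for P k
  proof -
    interpret sp P using that by (rule spM)
    have "emeasure P (F k) = (\<integral>\<^sup>+\<omega>. indicator (F k) \<omega> \<partial>P)"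
      using Fmeas[OF that] by simp
    also have "\<dots> = (\<integral>\<^sup>+\<omega>. indicator (S k) (stake k \<omega>) \<partial>P)"
      by (intro nn_integral_cong) (simp add: F_def indicator_def)
    also have "\<dots> = (\<integral>\<^sup>+x. emeasure P {\<omega>. stake k \<omega> = x} * indicator (S k) x \<partial>count_space UNIV)"
      by (rule int_stake)
    finally show ?thesis .
  qed
  define c where "c = ennreal \<delta> * ennreal (1/K)"
  have bnd: "emeasure \<mu> (F k) \<le> c * (\<Sum>\<nu>\<in>M. emeasure \<nu> (F k))" for k
  proof -
    have "emeasure \<mu> (F k) \<le> (\<integral>\<^sup>+x. c * (\<Sum>\<nu>\<in>M. emeasure \<nu> {\<omega>. stake k \<omega> = x} * indicator (S k) x) \<partial>count_space UNIV)"
      unfolding emF[OF assms(1)]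
    proof (intro nn_integral_mono)
      fix x :: "'a list"
      show "emeasure \<mu> {\<omega>. stake k \<omega> = x} * indicator (S k) x \<le> c * (\<Sum>\<nu>\<in>M. emeasure \<nu> {\<omega>. stake k \<omega> = x} * indicator (S k) x)"
      proof (cases "x \<in> S k")
        case True
        then have lx: "length x = k" and bx: "bad x" by (auto simp: S_def)
        have e: "emeasure P {\<omega>. stake k \<omega> = x} = ennreal (cyl P x)" if "P \<in> M" for P
        proof -
          interpret sp P using that by (rule spM)
          show ?thesis using cyl_ec[of x] lx by simp
        qed
        have le: "cyl \<mu> x \<le> \<delta> * mix M x"
        proof (cases "mix M x = 0")
          case True
          then show ?thesis using le_mix[OF assms(1), of x] by simp
        next
          case False
          then have "mix M x > 0" using mix0[of x] by simp
          then have "cyl \<mu> x < \<delta> * mix M x" using bx by (simp add: bad_def pos_divide_less_eq not_le)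
          then show ?thesis by simp
        qed
        have "emeasure \<mu> {\<omega>. stake k \<omega> = x} = ennreal (cyl \<mu> x)" using e assms by simp
        also have "\<dots> \<le> ennreal (\<delta> * mix M x)" using le by (rule ennreal_leI)
        also have "\<dots> = ennreal \<delta> * ennreal (mix M x)" using assms mix0 by (simp add: ennreal_mult)
        also have "\<dots> = c * (\<Sum>\<nu>\<in>M. ennreal (cyl \<nu> x))" unfolding mix_enn c_def by (simp add: ac_simps del: sum_ennreal)
        also have "(\<Sum>\<nu>\<in>M. ennreal (cyl \<nu> x)) = (\<Sum>\<nu>\<in>M. emeasure \<nu> {\<omega>. stake k \<omega> = x})"
          using e by (intro sum.cong) auto
        finally show ?thesis using True by simp
      qed simp
    qed
    also have "\<dots> = c * (\<Sum>\<nu>\<in>M. emeasure \<nu> (F k))"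
      by (simp add: nn_integral_cmult nn_integral_sum emF)
    finally show ?thesis .
  qed
  have "emeasure \<mu> (\<Union>k. F k) = (\<Sum>k. emeasure \<mu> (F k))"
    using Fmeas[OF assms(1)] disj by (intro suminf_emeasure[symmetric]) auto
  also have "\<dots> \<le> (\<Sum>k. c * (\<Sum>\<nu>\<in>M. emeasure \<nu> (F k)))" by (intro suminf_le bnd) auto
  also have "\<dots> = c * (\<Sum>\<nu>\<in>M. \<Sum>k. emeasure \<nu> (F k))" by (simp add: suminf_sum)
  also have "\<dots> = c * (\<Sum>\<nu>\<in>M. emeasure \<nu> (\<Union>k. F k))"
    using Fmeas disj by (intro arg_cong[where f="(*) c"] sum.cong refl suminf_emeasure) auto
  also have "\<dots> \<le> c * (\<Sum>\<nu>\<in>M. 1)"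
  proof (intro mult_left_mono sum_mono)
    fix \<nu> assume "\<nu> \<in> M"
    then interpret sp \<nu> by (rule spM)
    show "emeasure \<nu> (\<Union>k. F k) \<le> 1" by (rule emeasure_le_1)
  qed simp
  also have "\<dots> = ennreal \<delta>"
  proof -
    have "c * (\<Sum>\<nu>\<in>M. 1) = ennreal \<delta> * (ennreal (1/K) * ennreal K)" by (simp add: c_def K_def ennreal_of_nat_eq_real_of_nat mult.assoc)
    also have "ennreal (1/K) * ennreal K = 1" using K_pos by (simp flip: ennreal_mult)
    finally show ?thesis by simp
  qed
  finally show ?thesis unfolding UF .
qed


lemma hhat_upper:
  assumes "\<nu> \<in> active M \<delta> \<omega> n"
  shows "hellinger (cyl \<nu>) (mix M) (stake n \<omega>) \<le> hhat M \<delta> \<omega> n"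
proof -
  have "finite (active M \<delta> \<omega> n)" using finM by (rule rev_finite_subset) (auto simp: active_def)
  then show ?thesis unfolding hhat_def using assms
    by (intro cSup_upper) (auto intro: bdd_above_finite)
qed

lemma hhat_wit:
  assumes "\<epsilon> \<ge> 0" "hhat M \<delta> \<omega> n > \<epsilon>"
  shows "\<exists>\<nu>\<in>active M \<delta> \<omega> n. hellinger (cyl \<nu>) (mix M) (stake n \<omega>) > \<epsilon>"
proof -
  let ?X = "insert 0 ((\<lambda>\<nu>. hellinger (cyl \<nu>) (mix M) (stake n \<omega>)) ` active M \<delta> \<omega> n)"
  have "finite (active M \<delta> \<omega> n)" using finM by (rule rev_finite_subset) (auto simp: active_def)
  then have fin: "finite ?X" by simp
  have "hhat M \<delta> \<omega> n = Max ?X" unfolding hhat_def using fin by (intro cSup_eq_Max) auto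
  moreover have "Max ?X \<in> ?X" using fin by (intro Max_in) auto
  ultimately have "hhat M \<delta> \<omega> n \<in> ?X" by simp
  then show ?thesis using assms by auto
qed

lemma active_last: "\<nu> \<in> active M \<delta> \<omega> n \<Longrightarrow> gf \<delta> \<nu> (stake n \<omega>) = hellinger (cyl \<nu>) (mix M) (stake n \<omega>)"
  by (auto simp: active_def gf_def)

lemma hell_sym: "hellinger f g x = hellinger g f x"
  unfolding hellinger_def by (simp add: power2_commute)

lemma fail_bad:
  assumes "\<mu> \<in> M" "fails_at M \<epsilon> \<delta> \<mu> \<omega> n"
  shows "\<exists>k. \<not> \<delta> \<le> cyl \<mu> (stake k \<omega>) / mix M (stake k \<omega>)"
proof (rule ccontr)
  assume "\<not> ?thesis"
  then have "\<mu> \<in> active M \<delta> \<omega> n" using assms(1) by (auto simp: active_def)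
  then have "hellinger (cyl \<mu>) (mix M) (stake n \<omega>) \<le> hhat M \<delta> \<omega> n" by (rule hhat_upper)
  then show False using assms(2) by (auto simp: fails_at_def abstains_def hell_sym)
qed

lemma stake_prefix: "stake n \<omega> = stake n \<omega>' \<Longrightarrow> k \<le> n \<Longrightarrow> stake k \<omega> = stake k \<omega>'"
  by (metis min.absorb1 take_stake)

lemma active_take: "active M \<delta> \<omega> n = {\<nu>\<in>M. \<forall>k\<le>n. \<delta> \<le> cyl \<nu> (take k (stake n \<omega>)) / mix M (take k (stake n \<omega>))}"
  by (simp add: active_def take_stake min.absorb1)

lemma active_prefix: "stake n \<omega> = stake n \<omega>' \<Longrightarrow> active M \<delta> \<omega> n = active M \<delta> \<omega>' n"
  by (simp only: active_take)

lemma fails_prefix: "stake n \<omega> = stake n \<omega>' \<Longrightarrow> fails_at M \<epsilon> \<delta> \<mu> \<omega> n = fails_at M \<epsilon> \<delta> \<mu> \<omega>' n"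
  unfolding fails_at_def abstains_def hhat_def using active_prefix[of n \<omega> \<omega>'] by simp

lemma abst_prefix: "stake n \<omega> = stake n \<omega>' \<Longrightarrow> abstains M \<epsilon> \<delta> \<omega> n = abstains M \<epsilon> \<delta> \<omega>' n"
  unfolding abstains_def hhat_def using active_prefix[of n \<omega> \<omega>'] by simp

lemma bot_prefix:
  assumes "stake N \<omega> = stake N \<omega>'"
  shows "bot_steps M \<epsilon> \<delta> \<mu> \<omega> \<inter> {..<N} = bot_steps M \<epsilon> \<delta> \<mu> \<omega>' \<inter> {..<N}"
proof -
  have f: "fails_at M \<epsilon> \<delta> \<mu> \<omega> m = fails_at M \<epsilon> \<delta> \<mu> \<omega>' m" if "m < N" for m
    using that by (intro fails_prefix stake_prefix[OF assms]) simp
  have a: "abstains M \<epsilon> \<delta> \<omega> n = abstains M \<epsilon> \<delta> \<omega>' n" if "n < N" for n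
    using that by (intro abst_prefix stake_prefix[OF assms]) simp
  show ?thesis
  proof (intro equalityI subsetI)
    fix n assume "n \<in> bot_steps M \<epsilon> \<delta> \<mu> \<omega> \<inter> {..<N}"
    then show "n \<in> bot_steps M \<epsilon> \<delta> \<mu> \<omega>' \<inter> {..<N}" unfolding bot_steps_def using f a by auto
  next
    fix n assume "n \<in> bot_steps M \<epsilon> \<delta> \<mu> \<omega>' \<inter> {..<N}"
    then show "n \<in> bot_steps M \<epsilon> \<delta> \<mu> \<omega> \<inter> {..<N}" unfolding bot_steps_def using f a by auto
  qed
qed

lemma fin_card_iff:
  fixes A :: "nat set"
  shows "(finite A \<and> card A \<le> B) \<longleftrightarrow> (\<forall>N. card (A \<inter> {..<N}) \<le> B)"
proof
  assume H: "finite A \<and> card A \<le> B"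
  show "\<forall>N. card (A \<inter> {..<N}) \<le> B"
  proof
    fix N
    have "card (A \<inter> {..<N}) \<le> card A" using H by (intro card_mono) auto
    then show "card (A \<inter> {..<N}) \<le> B" using H by linarith
  qed
next
  assume H: "\<forall>N. card (A \<inter> {..<N}) \<le> B"
  show "finite A \<and> card A \<le> B"
  proof (cases "finite A")
    case True
    then obtain k where "A \<subseteq> {..<k}" using finite_nat_iff_bounded by blast
    then have "A \<inter> {..<k} = A" by auto
    then show ?thesis using H[rule_format, of k] True by simp
  next
    case False
    then obtain F where F: "finite F" "card F = Suc B" "F \<subseteq> A" using infinite_arbitrarily_large by blast
    then obtain k where "F \<subseteq> {..<k}" using finite_nat_iff_bounded by blast
    then have "F \<subseteq> A \<inter> {..<k}" using F by auto
    then have "card F \<le> card (A \<inter> {..<k})" by (intro card_mono) auto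
    then show ?thesis using H[rule_format, of k] F by simp
  qed
qed

lemma prefix_sets:
  assumes "\<nu> \<in> M" and "\<And>\<omega> \<omega>'. stake n \<omega> = stake n \<omega>' \<Longrightarrow> Q \<omega> = Q \<omega>'"
  shows "{\<omega>\<in>space \<nu>. Q \<omega>} \<in> sets \<nu>"
proof -
  interpret sp \<nu> using assms(1) by (rule spM)
  have "{\<omega>\<in>space \<nu>. Q \<omega>} = {\<omega>\<in>space \<nu>. stake n \<omega> \<in> {x. \<exists>\<omega>'. stake n \<omega>' = x \<and> Q \<omega>'}}"
  proof (intro equalityI subsetI)
    fix \<omega> assume "\<omega> \<in> {\<omega>\<in>space \<nu>. Q \<omega>}"
    then show "\<omega> \<in> {\<omega>\<in>space \<nu>. stake n \<omega> \<in> {x. \<exists>\<omega>'. stake n \<omega>' = x \<and> Q \<omega>'}}" by blast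
  next
    fix \<omega> assume "\<omega> \<in> {\<omega>\<in>space \<nu>. stake n \<omega> \<in> {x. \<exists>\<omega>'. stake n \<omega>' = x \<and> Q \<omega>'}}"
    then obtain \<omega>' where w: "stake n \<omega>' = stake n \<omega>" "Q \<omega>'" by blast
    have "Q \<omega>' = Q \<omega>" by (rule assms(2)[OF w(1)])
    then show "\<omega> \<in> {\<omega>\<in>space \<nu>. Q \<omega>}" using w(2) by simp
  qed
  then show ?thesis using pred_sets[of "\<lambda>x. x \<in> {x. \<exists>\<omega>'. stake n \<omega>' = x \<and> Q \<omega>'}" n] by simp
qed


lemma main:
  assumes mu: "\<mu> \<in> M" and e: "\<epsilon> > 0" and d: "\<delta> > 0"
    and B: "2*K^2/(sqrt \<delta> * \<delta> * \<epsilon>) \<le> real (Suc B)"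
  shows "{\<omega> \<in> space \<mu>. run_fails M \<epsilon> \<delta> \<mu> \<omega>} \<in> sets \<mu> \<and>
       measure \<mu> {\<omega> \<in> space \<mu>. run_fails M \<epsilon> \<delta> \<mu> \<omega>} \<le> \<delta> \<and>
       {\<omega> \<in> space \<mu>. finite (bot_steps M \<epsilon> \<delta> \<mu> \<omega>) \<and> card (bot_steps M \<epsilon> \<delta> \<mu> \<omega>) \<le> B} \<in> sets \<mu> \<and>
       measure \<mu> {\<omega> \<in> space \<mu>. finite (bot_steps M \<epsilon> \<delta> \<mu> \<omega>) \<and> card (bot_steps M \<epsilon> \<delta> \<mu> \<omega>) \<le> B} \<ge> 1 - \<delta>"
proof -
  interpret m: sp \<mu> using spM mu by blast
  define RF where "RF = {\<omega> \<in> space \<mu>. run_fails M \<epsilon> \<delta> \<mu> \<omega>}"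
  define G where "G = {\<omega> \<in> space \<mu>. finite (bot_steps M \<epsilon> \<delta> \<mu> \<omega>) \<and> card (bot_steps M \<epsilon> \<delta> \<mu> \<omega>) \<le> B}"
  have RFs: "RF \<in> sets \<mu>"
    unfolding RF_def run_fails_def
    by (rule sets.sets_Collect_countable_Ex, rule prefix_sets[OF mu], rule fails_prefix)
  have bads: "{\<omega>\<in>space \<mu>. \<exists>k. \<not> \<delta> \<le> cyl \<mu> (stake k \<omega>) / mix M (stake k \<omega>)} \<in> sets \<mu>"
    by (rule sets.sets_Collect_countable_Ex) (rule m.pred_sets)
  have "RF \<subseteq> {\<omega>\<in>space \<mu>. \<exists>k. \<not> \<delta> \<le> cyl \<mu> (stake k \<omega>) / mix M (stake k \<omega>)}"
    using fail_bad[OF mu] by (auto simp: RF_def run_fails_def)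
  then have "emeasure \<mu> RF \<le> emeasure \<mu> {\<omega>\<in>space \<mu>. \<exists>k. \<not> \<delta> \<le> cyl \<mu> (stake k \<omega>) / mix M (stake k \<omega>)}"
    using bads by (rule emeasure_mono)
  also have "\<dots> \<le> ennreal \<delta>" using bad_prob[OF mu d] by simp
  finally have "measure \<mu> RF \<le> \<delta>" using d by (simp add: m.emeasure_eq_measure)
  note part1 = RFs this

  have G_eq: "G = {\<omega> \<in> space \<mu>. \<forall>N. card (bot_steps M \<epsilon> \<delta> \<mu> \<omega> \<inter> {..<N}) \<le> B}"
    unfolding G_def fin_card_iff ..
  have Gs: "G \<in> sets \<mu>"
    unfolding G_eq
  proof (rule sets.sets_Collect_countable_All)
    fix N :: nat
    show "{\<omega> \<in> space \<mu>. card (bot_steps M \<epsilon> \<delta> \<mu> \<omega> \<inter> {..<N}) \<le> B} \<in> sets \<mu>"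
    proof (rule prefix_sets[OF mu, where n=N])
      fix \<omega> \<omega>' :: "'a stream" assume "stake N \<omega> = stake N \<omega>'"
      from bot_prefix[OF this] show "(card (bot_steps M \<epsilon> \<delta> \<mu> \<omega> \<inter> {..<N}) \<le> B) = (card (bot_steps M \<epsilon> \<delta> \<mu> \<omega>' \<inter> {..<N}) \<le> B)"
        by simp
    qed
  qed
  define U where "U \<omega> = (\<Sum>n. \<Sum>\<nu>\<in>M. ennreal (gf \<delta> \<nu> (stake n \<omega>)))" for \<omega>
  have mt[measurable]: "(\<lambda>\<omega>. ennreal (gf \<delta> \<nu> (stake n \<omega>))) \<in> borel_measurable \<mu>" for n \<nu>
    by (rule measurable_compose[OF m.meas_stake]) simp
  have Um[measurable]: "U \<in> borel_measurable \<mu>" unfolding U_def by measurable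
  have intU: "(\<integral>\<^sup>+\<omega>. U \<omega> \<partial>\<mu>) \<le> ennreal (K * (2*K/sqrt \<delta>))"
  proof -
    have "(\<integral>\<^sup>+\<omega>. U \<omega> \<partial>\<mu>) = (\<Sum>n. \<integral>\<^sup>+\<omega>. (\<Sum>\<nu>\<in>M. ennreal (gf \<delta> \<nu> (stake n \<omega>))) \<partial>\<mu>)"
      unfolding U_def by (rule nn_integral_suminf) measurable
    also have "\<dots> = (\<Sum>n. \<Sum>\<nu>\<in>M. \<integral>\<^sup>+\<omega>. ennreal (gf \<delta> \<nu> (stake n \<omega>)) \<partial>\<mu>)"
      by (subst nn_integral_sum) auto
    also have "\<dots> = (\<Sum>\<nu>\<in>M. \<Sum>n. \<integral>\<^sup>+\<omega>. ennreal (gf \<delta> \<nu> (stake n \<omega>)) \<partial>\<mu>)"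
      by (rule suminf_sum) simp
    also have "\<dots> \<le> (\<Sum>\<nu>\<in>M. ennreal (2*K/sqrt \<delta>))"
      by (intro sum_mono expect_bound mu d)
    also have "\<dots> = ennreal (K * (2*K/sqrt \<delta>))"
      using K_pos d by (simp add: K_def ennreal_of_nat_eq_real_of_nat) (subst ennreal_mult[symmetric], auto)
    finally show ?thesis .
  qed
  have cnt: "ennreal (real (Suc B) * \<epsilon>) \<le> U \<omega>" if "\<omega> \<notin> G" "\<omega> \<in> space \<mu>" for \<omega>
  proof -
    from that obtain N where N: "\<not> card (bot_steps M \<epsilon> \<delta> \<mu> \<omega> \<inter> {..<N}) \<le> B" unfolding G_eq by auto
    define A where "A = bot_steps M \<epsilon> \<delta> \<mu> \<omega> \<inter> {..<N}"
    define Gs where "Gs n = (\<Sum>\<nu>\<in>M. gf \<delta> \<nu> (stake n \<omega>))" for n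
    have Gs0: "Gs n \<ge> 0" for n by (simp add: Gs_def sum_nonneg gf_nonneg)
    have AG: "\<epsilon> \<le> Gs n" if "n \<in> A" for n
    proof -
      have "abstains M \<epsilon> \<delta> \<omega> n" using that by (simp add: A_def bot_steps_def)
      then obtain \<nu> where \<nu>: "\<nu> \<in> active M \<delta> \<omega> n" "hellinger (cyl \<nu>) (mix M) (stake n \<omega>) > \<epsilon>"
        using hhat_wit[of \<epsilon> \<delta> \<omega> n] e by (auto simp: abstains_def)
      have \<nu>M: "\<nu> \<in> M" using \<nu>(1) by (simp add: active_def)
      have "\<epsilon> \<le> gf \<delta> \<nu> (stake n \<omega>)" using \<nu> active_last by simp
      also have "\<dots> \<le> Gs n" unfolding Gs_def using finM \<nu>M by (intro member_le_sum) (auto simp: gf_nonneg)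
      finally show ?thesis .
    qed
    have finA: "finite A" by (simp add: A_def)
    have "real (Suc B) * \<epsilon> \<le> real (card A) * \<epsilon>" using N e by (simp add: A_def)
    also have "\<dots> = (\<Sum>n\<in>A. \<epsilon>)" by simp
    also have "\<dots> \<le> (\<Sum>n\<in>A. Gs n)" using AG by (rule sum_mono)
    also have "\<dots> \<le> (\<Sum>n<N. Gs n)" using Gs0 by (intro sum_mono2) (auto simp: A_def)
    finally have r: "real (Suc B) * \<epsilon> \<le> (\<Sum>n<N. Gs n)" .
    have "ennreal (\<Sum>n<N. Gs n) = (\<Sum>n<N. \<Sum>\<nu>\<in>M. ennreal (gf \<delta> \<nu> (stake n \<omega>)))"
      by (simp add: Gs_def gf_nonneg sum_nonneg)
    also have "\<dots> \<le> U \<omega>" unfolding U_def by (intro sum_le_suminf) auto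
    finally show ?thesis using r by (meson ennreal_leI order_trans)
  qed
  define c where "c = ennreal (1 / (real (Suc B) * \<epsilon>))"
  have sub: "space \<mu> - G \<subseteq> {x\<in>space \<mu>. 1 \<le> c * U x}"
  proof
    fix \<omega> assume w: "\<omega> \<in> space \<mu> - G"
    have "1 = c * ennreal (real (Suc B) * \<epsilon>)" using e
      by (simp add: c_def flip: ennreal_mult)
    also have "\<dots> \<le> c * U \<omega>" using cnt[of \<omega>] w by (intro mult_left_mono) auto
    finally show "\<omega> \<in> {x\<in>space \<mu>. 1 \<le> c * U x}" using w by simp
  qed
  have "emeasure \<mu> (space \<mu> - G) \<le> emeasure \<mu> {x\<in>space \<mu>. 1 \<le> c * U x}"
    by (rule emeasure_mono[OF sub]) measurable
  also have "\<dots> \<le> c * (\<integral>\<^sup>+x. U x * indicator (space \<mu>) x \<partial>\<mu>)"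
    using sets.top[of \<mu>] by (intro nn_integral_Markov_inequality) auto
  also have "\<dots> = c * (\<integral>\<^sup>+x. U x \<partial>\<mu>)" by simp
  also have "\<dots> \<le> c * ennreal (K * (2*K/sqrt \<delta>))" by (intro mult_left_mono intU) auto
  also have "\<dots> = ennreal ((K * (2*K/sqrt \<delta>)) / (real (Suc B) * \<epsilon>))"
    using e d K_pos by (simp add: c_def flip: ennreal_mult)
  also have "\<dots> \<le> ennreal \<delta>"
  proof (rule ennreal_leI)
    have sd: "sqrt \<delta> > 0" using d by simp
    have p3: "sqrt \<delta> * \<delta> * \<epsilon> > 0" using sd d e by simp
    have pB: "real (Suc B) * \<epsilon> > 0" using e by simp
    have h1: "2*K^2 \<le> real (Suc B) * (sqrt \<delta> * \<delta> * \<epsilon>)" using B by (simp only: pos_divide_le_eq[OF p3])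
    have h2: "K * (2*K/sqrt \<delta>) = 2*K^2/sqrt \<delta>" by (simp add: power2_eq_square)
    have h3: "2*K^2/sqrt \<delta> \<le> \<delta> * (real (Suc B) * \<epsilon>)"
      by (subst pos_divide_le_eq[OF sd]) (use h1 in \<open>simp only: ac_simps\<close>)
    show "(K * (2*K/sqrt \<delta>)) / (real (Suc B) * \<epsilon>) \<le> \<delta>"
      by (subst pos_divide_le_eq[OF pB], unfold h2, rule h3)
  qed
  finally have "measure \<mu> (space \<mu> - G) \<le> \<delta>" using d by (simp add: m.emeasure_eq_measure)
  then have "measure \<mu> G \<ge> 1 - \<delta>" using m.prob_compl[OF Gs] by simp
  with part1 Gs show ?thesis unfolding RF_def G_def by blast
qed

end


theorem theorem9:
  fixes \<epsilon> \<delta> :: real and K :: nat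
  assumes "\<epsilon> > 0" and "\<delta> > 0"
  shows "\<exists>B::nat. \<forall>M :: ('a::countable) stream measure set.
    finite M \<and> card M = K \<and>
    (\<forall>\<nu>\<in>M. prob_space \<nu> \<and> sets \<nu> = sets (stream_space (count_space UNIV))) \<longrightarrow>
    (\<forall>\<mu>\<in>M.
       {\<omega> \<in> space \<mu>. run_fails M \<epsilon> \<delta> \<mu> \<omega>} \<in> sets \<mu> \<and>
       measure \<mu> {\<omega> \<in> space \<mu>. run_fails M \<epsilon> \<delta> \<mu> \<omega>} \<le> \<delta> \<and>
       {\<omega> \<in> space \<mu>. finite (bot_steps M \<epsilon> \<delta> \<mu> \<omega>) \<and> card (bot_steps M \<epsilon> \<delta> \<mu> \<omega>) \<le> B} \<in> sets \<mu> \<and>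
       measure \<mu> {\<omega> \<in> space \<mu>. finite (bot_steps M \<epsilon> \<delta> \<mu> \<omega>) \<and> card (bot_steps M \<epsilon> \<delta> \<mu> \<omega>) \<le> B} \<ge> 1 - \<delta>)"
proof (intro exI allI impI ballI)
  define B where "B = nat \<lceil>2 * (real K)^2 / (sqrt \<delta> * \<delta> * \<epsilon>)\<rceil>"
  fix M :: "'a stream measure set" and \<mu>
  assume H: "finite M \<and> card M = K \<and> (\<forall>\<nu>\<in>M. prob_space \<nu> \<and> sets \<nu> = sets (stream_space (count_space UNIV)))"
    and mu: "\<mu> \<in> M"
  have fm: "fam M"
  proof (rule fam.intro)
    show "finite M" using H by simp
    show "M \<noteq> {}" using mu by auto
    fix \<nu> assume "\<nu> \<in> M"
    then have "prob_space \<nu>" "sets \<nu> = sets (stream_space (count_space UNIV))" using H by auto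
    then show "sp \<nu>" by (intro sp.intro sp_axioms.intro)
  qed
  interpret fam M by (rule fm)
  have KK: "fam.K M = real K" using H by (simp add: K_def)
  have "2 * (fam.K M)^2 / (sqrt \<delta> * \<delta> * \<epsilon>) \<le> real (Suc B)"
    unfolding KK B_def by linarith
  from main[OF mu assms(1,2) this]
  show "{\<omega> \<in> space \<mu>. run_fails M \<epsilon> \<delta> \<mu> \<omega>} \<in> sets \<mu> \<and>
       measure \<mu> {\<omega> \<in> space \<mu>. run_fails M \<epsilon> \<delta> \<mu> \<omega>} \<le> \<delta> \<and>
       {\<omega> \<in> space \<mu>. finite (bot_steps M \<epsilon> \<delta> \<mu> \<omega>) \<and> card (bot_steps M \<epsilon> \<delta> \<mu> \<omega>) \<le> B} \<in> sets \<mu> \<and>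
       measure \<mu> {\<omega> \<in> space \<mu>. finite (bot_steps M \<epsilon> \<delta> \<mu> \<omega>) \<and> card (bot_steps M \<epsilon> \<delta> \<mu> \<omega>) \<le> B} \<ge> 1 - \<delta>" .
qed

end
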